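(* Let $n$ be even and $F\colon\mathbb F_2^n\to\mathbb F_2^n$ a quadratic APN function with amplitude distribution $[0^{k_0},2^{k_2},\dots,n^{k_n}]$. Then (i) $\sum_{i=1}^{n/2}k_{2i}(2^{2i}-1)=2^n-1$; (ii) if $i>n/2$ then $k_i\le1$; (iii) if $i\neq j$ and $k_i,k_j\ge1$, then $i+j\le n$.
   Context: $\langle\cdot,\cdot\rangle$ is the standard dot product. $F$ is APN if for every $a\ne0$ and $c$, $F(x)+F(x+a)=c$ has at most 2 solutions; quadratic if each component $F_b(x)=\langle b,F(x)\rangle$ is a quadratic form plus an affine function. For quadratic $F$ and fixed $b$ there is $k$ with $|W_F(b,a)|\in\{0,2^{(n+k)/2}\}$ for all $a$, where $W_F(b,a)=\sum_x(-1)^{F_b(x)+\langle x,a\rangle}$; $2^{(n+k)/2}$ is the amplitude of $F_b$. The amplitude distribution $[0^{k_0},1^{k_1},\dots,n^{k_n}]$ means exactly $k_i$ nonzero $b$ give amplitude $2^{(n+i)/2}$ (here only even $i$ occur). *)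

theory Defs
  imports "HOL-Analysis.Analysis" "HOL-Library.Z2"
begin

text \<open>F_2 is the two-element field bit from HOL-Library.Z2; F_2^n is bit^'n with n = CARD('n).\<close>

lemma UNIV_bit_eq: "(UNIV :: bit set) = {0, 1}"
proof -
  have "x = 0 \<or> x = 1" for x :: bit by (cases x) auto
  then show ?thesis by auto
qed

instance bit :: finite
  by standard (simp add: UNIV_bit_eq)

definition dotp :: "bit ^ 'n \<Rightarrow> bit ^ 'n \<Rightarrow> bit" where
  "dotp x y = (\<Sum>i\<in>UNIV. x $ i * y $ i)"

definition component :: "(bit ^ 'n \<Rightarrow> bit ^ 'n) \<Rightarrow> bit ^ 'n \<Rightarrow> bit ^ 'n \<Rightarrow> bit" where
  "component F b x = dotp b (F x)"

definition is_APN :: "(bit ^ 'n \<Rightarrow> bit ^ 'n) \<Rightarrow> bool" where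
  "is_APN F \<longleftrightarrow> (\<forall>a c. a \<noteq> 0 \<longrightarrow> card {x. F x + F (x + a) = c} \<le> 2)"

definition quadratic_plus_affine :: "(bit ^ 'n \<Rightarrow> bit) \<Rightarrow> bool" where
  "quadratic_plus_affine f \<longleftrightarrow>
     (\<exists>(q :: 'n \<Rightarrow> 'n \<Rightarrow> bit) (c :: bit ^ 'n) (d :: bit).
        \<forall>x. f x = (\<Sum>i\<in>UNIV. \<Sum>j\<in>UNIV. q i j * x $ i * x $ j) + dotp c x + d)"

definition is_quadratic :: "(bit ^ 'n \<Rightarrow> bit ^ 'n) \<Rightarrow> bool" where
  "is_quadratic F \<longleftrightarrow> (\<forall>b. quadratic_plus_affine (component F b))"

definition sgn_bit :: "bit \<Rightarrow> int" where
  "sgn_bit v = (if v = 0 then 1 else -1)"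

definition walsh :: "(bit ^ 'n \<Rightarrow> bit ^ 'n) \<Rightarrow> bit ^ 'n \<Rightarrow> bit ^ 'n \<Rightarrow> int" where
  "walsh F b a = (\<Sum>x\<in>UNIV. sgn_bit (component F b x + dotp x a))"

text \<open>F_b has amplitude 2^((n+k)/2): |W_F(b,a)| \<in> {0, 2^((n+k)/2)} for all a, the
  nonzero value being attained. Stated with squares: W^2 = 2^(n+k).\<close>
definition has_amplitude_exp :: "(bit ^ 'n \<Rightarrow> bit ^ 'n) \<Rightarrow> bit ^ 'n \<Rightarrow> nat \<Rightarrow> bool" where
  "has_amplitude_exp F b k \<longleftrightarrow>
     (\<forall>a. walsh F b a = 0 \<or> (walsh F b a)\<^sup>2 = 2 ^ (CARD('n) + k)) \<and>
     (\<exists>a. (walsh F b a)\<^sup>2 = 2 ^ (CARD('n) + k))"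

definition amp_dist :: "(bit ^ 'n \<Rightarrow> bit ^ 'n) \<Rightarrow> nat \<Rightarrow> nat" where
  "amp_dist F i = card {b. b \<noteq> 0 \<and> has_amplitude_exp F b i}"

end

theory Submission imports Defs "HOL-Computational_Algebra.Primes"
begin
declare add_bit_eq_xor [simp del] mult_bit_eq_and [simp del]

lemma bit_cases': "(x::bit) = 0 \<or> x = 1" by (cases x) auto

lemma bit_add_self [simp]: "(x::bit) + x = 0"
  using bit_cases'[of x] by auto

lemma bit_one_one [simp]: "(1::bit) + 1 = 0" by simp

lemma vec_add_self [simp]: "(v::bit^'n) + v = 0"
  by (simp add: vec_eq_iff)

lemma vec_add_cancel [simp]: "(v::bit^'n) + w + w = v" "w + (w + v) = v"
  by (simp_all add: vec_eq_iff add.assoc)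

lemma card_bit [simp]: "CARD(bit) = 2"
  by (simp add: UNIV_bit_eq)

lemma card_bitvec: "CARD(bit^'n) = 2 ^ CARD('n)"
  by simp

lemma sgn_bit_add: "sgn_bit (x + y) = sgn_bit x * sgn_bit y"
  using bit_cases'[of x] bit_cases'[of y] by (auto simp: sgn_bit_def)

lemma sgn_bit_one [simp]: "sgn_bit 1 = -1" "sgn_bit 0 = 1" by (simp_all add: sgn_bit_def)

lemma dotp_add_right: "dotp b (x + y) = dotp b x + dotp b y"
  by (simp add: dotp_def distrib_left sum.distrib)

lemma dotp_comm: "dotp x y = dotp y x"
  by (simp add: dotp_def mult.commute)

lemma dotp_add_left: "dotp (x + y) b = dotp x b + dotp y b"
  by (simp add: dotp_comm dotp_add_right)

lemma dotp_zero [simp]: "dotp 0 x = 0" "dotp x 0 = 0"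
  by (simp_all add: dotp_def)

lemma dotp_axis: "dotp (axis i 1) v = v $ i"
proof -
  have "dotp (axis i 1) v = (\<Sum>j\<in>UNIV. if j = i then v $ i else 0)"
    unfolding dotp_def by (rule sum.cong) (auto simp: axis_def)
  then show ?thesis by simp
qed

lemma dotp_all_zero: "(\<forall>b. dotp b v = 0) \<longleftrightarrow> v = 0"
  by (metis dotp_axis dotp_zero(2) vec_eq_iff zero_index)

lemma char_sum:
  fixes V :: "(bit^'n) set" and h :: "bit^'n \<Rightarrow> bit"
  assumes cl: "\<And>u v. u \<in> V \<Longrightarrow> v \<in> V \<Longrightarrow> u + v \<in> V"
    and hadd: "\<And>u v. u \<in> V \<Longrightarrow> v \<in> V \<Longrightarrow> h (u + v) = h u + h v"
  shows "(\<Sum>u\<in>V. sgn_bit (h u)) = (if \<forall>u\<in>V. h u = 0 then int (card V) else 0)"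
proof (cases "\<forall>u\<in>V. h u = 0")
  case True
  then show ?thesis by simp
next
  case False
  then obtain u0 where u0: "u0 \<in> V" "h u0 = 1" using bit_cases' by blast
  have "(\<Sum>u\<in>V. sgn_bit (h u)) = (\<Sum>u\<in>V. sgn_bit (h (u + u0)))"
    by (rule sum.reindex_bij_witness[where i="\<lambda>u. u + u0" and j="\<lambda>u. u + u0"])
       (auto simp: cl u0)
  also have "\<dots> = (\<Sum>u\<in>V. - sgn_bit (h u))"
    by (rule sum.cong) (auto simp: hadd u0 sgn_bit_add)
  also have "\<dots> = - (\<Sum>u\<in>V. sgn_bit (h u))" by (simp add: sum_negf)
  finally have "(\<Sum>u\<in>V. sgn_bit (h u)) = 0" by simp
  then show ?thesis by (simp only: if_not_P[OF False])
qed

lemma dotp_sum: "(\<Sum>b\<in>UNIV. sgn_bit (dotp b v)) = (if v = 0 then 2 ^ CARD('n) else 0)"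
  for v :: "bit^'n"
  using char_sum[of UNIV "\<lambda>b. dotp b v"] dotp_all_zero[of v]
  by (simp add: dotp_add_left card_bitvec)

lemma bit_cancel [simp]: "(a::bit) + (a + b) = b"
  by (simp add: add.assoc[symmetric])

lemma bit_eq_from_add: "(a::bit) + b = 0 \<Longrightarrow> a = b"
  using bit_cases'[of a] bit_cases'[of b] by auto

lemma bit7: "(q::bit) * (a+b+c) * (a'+b'+c') + q*(a+c)*(a'+c') + q*(b+c)*(b'+c') + q*c*c'
   + q*(a+b)*(a'+b') + q*a*a' + q*b*b' + q*0*0 = 0"
  using bit_cases'[of q] bit_cases'[of a] bit_cases'[of b] bit_cases'[of c]
    bit_cases'[of a'] bit_cases'[of b'] bit_cases'[of c']
  by (elim disjE) simp_all

lemma bit4: "(q::bit) * (a+b+c) + q*(a+c) + q*(b+c) + q*c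
   + q*(a+b) + q*a + q*b + q*0 = 0"
  using bit_cases'[of q] bit_cases'[of a] bit_cases'[of b] bit_cases'[of c]
  by (elim disjE) simp_all

lemma third_deriv:
  fixes f :: "bit^'n \<Rightarrow> bit"
  assumes "quadratic_plus_affine f"
  shows "f (x+y+u) + f (x+u) + f (y+u) + f u + f (x+y) + f x + f y + f 0 = 0"
proof -
  obtain q c d where fd: "\<And>x. f x = (\<Sum>i\<in>UNIV. \<Sum>j\<in>UNIV. q i j * x $ i * x $ j) + dotp c x + d"
    using assms unfolding quadratic_plus_affine_def by blast
  define Q where "Q = (\<lambda>x::bit^'n. (\<Sum>i\<in>UNIV. \<Sum>j\<in>UNIV. q i j * x $ i * x $ j))"
  define L where "L = (\<lambda>x::bit^'n. (\<Sum>i\<in>UNIV. c $ i * x $ i))"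
  have fd': "\<And>x. f x = Q x + L x + d" unfolding Q_def L_def fd dotp_def ..
  have Q8: "Q (x+y+u) + Q (x+u) + Q (y+u) + Q u + Q (x+y) + Q x + Q y + Q 0 = 0"
  proof -
    have "Q (x+y+u) + Q (x+u) + Q (y+u) + Q u + Q (x+y) + Q x + Q y + Q 0 =
      (\<Sum>i\<in>UNIV. \<Sum>j\<in>UNIV. q i j * (x+y+u) $ i * (x+y+u) $ j + q i j * (x+u) $ i * (x+u) $ j
        + q i j * (y+u) $ i * (y+u) $ j + q i j * u $ i * u $ j + q i j * (x+y) $ i * (x+y) $ j
        + q i j * x $ i * x $ j + q i j * y $ i * y $ j + q i j * (0::bit^'n) $ i * (0::bit^'n) $ j)"
      unfolding Q_def by (simp only: sum.distrib)
    also have "\<dots> = 0"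
      by (rule sum.neutral, rule ballI, rule sum.neutral, rule ballI)
         (simp only: vector_add_component zero_index bit7)
    finally show ?thesis .
  qed
  have L8: "L (x+y+u) + L (x+u) + L (y+u) + L u + L (x+y) + L x + L y + L 0 = 0"
  proof -
    have "L (x+y+u) + L (x+u) + L (y+u) + L u + L (x+y) + L x + L y + L 0 =
      (\<Sum>i\<in>UNIV. c $ i * (x+y+u) $ i + c $ i * (x+u) $ i
        + c $ i * (y+u) $ i + c $ i * u $ i + c $ i * (x+y) $ i
        + c $ i * x $ i + c $ i * y $ i + c $ i * (0::bit^'n) $ i)"
      unfolding L_def by (simp only: sum.distrib)
    also have "\<dots> = 0"
      by (rule sum.neutral, rule ballI)
         (simp only: vector_add_component zero_index bit4)
    finally show ?thesis .
  qed
  have "f (x+y+u) + f (x+u) + f (y+u) + f u + f (x+y) + f x + f y + f 0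
     = (Q (x+y+u) + Q (x+u) + Q (y+u) + Q u + Q (x+y) + Q x + Q y + Q 0)
     + (L (x+y+u) + L (x+u) + L (y+u) + L u + L (x+y) + L x + L y + L 0)
     + (d + d + d + d + d + d + d + d)"
    unfolding fd' by (simp only: ac_simps)
  also have "\<dots> = 0" unfolding Q8 L8 by (simp add: add.assoc)
  finally show ?thesis .
qed

definition Dv :: "(bit ^ 'n \<Rightarrow> bit ^ 'n) \<Rightarrow> bit ^ 'n \<Rightarrow> bit ^ 'n \<Rightarrow> bit ^ 'n" where
  "Dv F u x = F (x + u) + F x + F u + F 0"

lemma Dv_sym: "Dv F u x = Dv F x u"
  unfolding Dv_def by (simp add: ac_simps)

lemma vec_eq_by_dotp: "(\<And>b. dotp b v = dotp b w) \<Longrightarrow> v = (w::bit^'n)"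
proof -
  assume "\<And>b. dotp b v = dotp b w"
  then have "\<forall>b. dotp b (v + w) = 0" by (simp add: dotp_add_right)
  then have "v + w = 0" using dotp_all_zero by blast
  then have "v + w + w = w" by simp
  then show ?thesis by simp
qed

lemma Dv_add:
  assumes "is_quadratic F"
  shows "Dv F u (x + y) = Dv F u x + Dv F u y"
proof (rule vec_eq_by_dotp)
  fix b
  have t: "component F b (x+y+u) + component F b (x+u) + component F b (y+u) + component F b u
     + component F b (x+y) + component F b x + component F b y + component F b 0 = 0"
    using assms unfolding is_quadratic_def by (blast intro: third_deriv)
  show "dotp b (Dv F u (x + y)) = dotp b (Dv F u x + Dv F u y)"
    unfolding Dv_def dotp_add_right
    by (rule bit_eq_from_add) (use t in \<open>simp add: ac_simps component_def\<close>)
qed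

definition Vb :: "(bit ^ 'n \<Rightarrow> bit ^ 'n) \<Rightarrow> bit ^ 'n \<Rightarrow> (bit ^ 'n) set" where
  "Vb F b = {u. \<forall>x. dotp b (Dv F u x) = 0}"

lemma Dv_zero [simp]: "Dv F 0 x = 0"
  unfolding Dv_def by simp

lemma zero_in_Vb [simp]: "0 \<in> Vb F b"
  unfolding Vb_def by simp

lemma Vb_closed:
  assumes "is_quadratic F" "u \<in> Vb F b" "v \<in> Vb F b"
  shows "u + v \<in> Vb F b"
proof -
  have "dotp b (Dv F (u + v) x) = 0" for x
  proof -
    have "dotp b (Dv F (u + v) x) = dotp b (Dv F x (u + v))" by (simp add: Dv_sym)
    also have "\<dots> = dotp b (Dv F u x) + dotp b (Dv F v x)"
      using Dv_add[OF assms(1)] by (simp add: dotp_add_right Dv_sym)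
    finally show ?thesis using assms(2,3) unfolding Vb_def by simp
  qed
  then show ?thesis unfolding Vb_def by simp
qed

lemma subgroup_card_dvd:
  fixes V :: "(bit^'n) set"
  assumes z: "0 \<in> V" and cl: "\<And>u v. u \<in> V \<Longrightarrow> v \<in> V \<Longrightarrow> u + v \<in> V"
  shows "card V dvd 2 ^ CARD('n)"
proof -
  define C where "C = (\<lambda>x. (\<lambda>v. x + v) ` V) ` UNIV"
  have cardc: "\<forall>c\<in>C. card c = card V"
    unfolding C_def by (auto intro!: card_image inj_onI)
  have disj: "\<forall>c1\<in>C. \<forall>c2\<in>C. c1 \<noteq> c2 \<longrightarrow> c1 \<inter> c2 = {}"
  proof (intro ballI impI)
    fix c1 c2 assume c1: "c1 \<in> C" and c2: "c2 \<in> C" and ne: "c1 \<noteq> c2"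
    obtain x where x: "c1 = (\<lambda>v. x + v) ` V" using c1 C_def by auto
    obtain y where y: "c2 = (\<lambda>v. y + v) ` V" using c2 C_def by auto
    show "c1 \<inter> c2 = {}"
    proof (rule ccontr)
      assume "c1 \<inter> c2 \<noteq> {}"
      then obtain v1 v2 where v: "v1 \<in> V" "v2 \<in> V" "x + v1 = y + v2" using x y by auto
      then have xy: "x = y + (v2 + v1)"
        by (metis add.assoc vec_add_cancel(1))
      have "c1 = c2"
        unfolding x y xy
      proof (rule set_eqI)
        fix w
        show "w \<in> (\<lambda>v. y + (v2 + v1) + v) ` V \<longleftrightarrow> w \<in> (\<lambda>v. y + v) ` V"
        proof
          assume "w \<in> (\<lambda>v. y + (v2 + v1) + v) ` V"
          then obtain v where "v \<in> V" "w = y + (v2 + v1) + v" by auto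
          then show "w \<in> (\<lambda>v. y + v) ` V"
            using cl v by (auto simp: add.assoc intro!: image_eqI)
        next
          assume "w \<in> (\<lambda>v. y + v) ` V"
          then obtain v where vv: "v \<in> V" "w = y + v" by auto
          have "w = y + (v2 + v1) + ((v2 + v1) + v)"
            using vv vec_add_cancel(2)[of "v2+v1" v] by (metis add.assoc)
          then show "w \<in> (\<lambda>v. y + (v2 + v1) + v) ` V"
            using cl v vv by blast
        qed
      qed
      then show False using ne by simp
    qed
  qed
  have un: "\<Union>C = UNIV"
  proof -
    have "x \<in> \<Union>C" for x
      unfolding C_def using z by (auto intro!: bexI[of _ "(\<lambda>v. x + v) ` V"] image_eqI[of x _ 0])
    then show ?thesis by auto
  qed
  have "card V * card C = card (\<Union>C)"
    apply (rule card_partition)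
       apply simp
      apply simp
    using cardc apply blast
    using disj apply blast
    done
  then have "card V * card C = 2 ^ CARD('n)" using un by simp
  then show ?thesis by (metis dvd_triv_left)
qed

lemma Vb_card_pow:
  fixes F :: "bit^'n \<Rightarrow> bit^'n"
  assumes "is_quadratic F"
  shows "\<exists>m \<le> CARD('n). card (Vb F b) = 2 ^ m"
proof -
  have "card (Vb F b) dvd 2 ^ CARD('n)"
    by (rule subgroup_card_dvd) (auto intro: Vb_closed[OF assms])
  then show ?thesis using divides_primepow_nat[of 2] by simp
qed

lemma B_expand: "dotp b (Dv F u x) = component F b (x + u) + component F b x + component F b u + component F b 0"
  unfolding Dv_def component_def dotp_add_right ..

lemma inner_char:
  fixes F :: "bit^'n \<Rightarrow> bit^'n"
  assumes q: "is_quadratic F"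
  shows "(\<Sum>x\<in>UNIV. sgn_bit (dotp b (Dv F u x))) = (if u \<in> Vb F b then 2 ^ CARD('n) else 0)"
proof -
  have "(\<Sum>x\<in>(UNIV::(bit^'n) set). sgn_bit (dotp b (Dv F u x)))
      = (if \<forall>x\<in>UNIV. dotp b (Dv F u x) = 0 then int (card (UNIV::(bit^'n) set)) else 0)"
    by (rule char_sum) (auto simp: Dv_add[OF q] dotp_add_right)
  then show ?thesis unfolding Vb_def by (simp add: card_bitvec)
qed

definition hfun :: "(bit ^ 'n \<Rightarrow> bit ^ 'n) \<Rightarrow> bit ^ 'n \<Rightarrow> bit ^ 'n \<Rightarrow> bit ^ 'n \<Rightarrow> bit" where
  "hfun F b a u = component F b u + component F b 0 + dotp u a"

lemma hfun_add:
  fixes F :: "bit^'n \<Rightarrow> bit^'n"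
  assumes "u \<in> Vb F b"
  shows "hfun F b a (u + v) = hfun F b a u + hfun F b a v"
proof -
  have "dotp b (Dv F u v) = 0" using assms unfolding Vb_def by simp
  then have e: "component F b (v + u) + component F b v + component F b u + component F b 0 = 0"
    by (simp add: B_expand)
  show ?thesis unfolding hfun_def dotp_add_left
    by (rule bit_eq_from_add) (use e in \<open>simp add: ac_simps\<close>)
qed

lemma walsh_sq:
  fixes F :: "bit^'n \<Rightarrow> bit^'n"
  assumes q: "is_quadratic F"
  shows "(walsh F b a)\<^sup>2 = 2 ^ CARD('n) *
     (if \<forall>u\<in>Vb F b. hfun F b a u = 0 then int (card (Vb F b)) else 0)"
proof -
  let ?f = "component F b"
  let ?V = "Vb F b"
  have "(walsh F b a)\<^sup>2 = (\<Sum>x\<in>UNIV. \<Sum>y\<in>UNIV. sgn_bit (?f x + dotp x a) * sgn_bit (?f y + dotp y a))"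
    unfolding walsh_def power2_eq_square sum_product ..
  also have "\<dots> = (\<Sum>x\<in>UNIV. \<Sum>u\<in>UNIV. sgn_bit (?f x + dotp x a) * sgn_bit (?f (x + u) + dotp (x + u) a))"
  proof (rule sum.cong[OF refl])
    fix x :: "bit^'n"
    show "(\<Sum>y\<in>UNIV. sgn_bit (?f x + dotp x a) * sgn_bit (?f y + dotp y a)) =
          (\<Sum>u\<in>UNIV. sgn_bit (?f x + dotp x a) * sgn_bit (?f (x + u) + dotp (x + u) a))"
      by (rule sum.reindex_bij_witness[where i="\<lambda>u. x + u" and j="\<lambda>u. x + u"]) auto
  qed
  also have "\<dots> = (\<Sum>x\<in>UNIV. \<Sum>u\<in>UNIV. sgn_bit (dotp b (Dv F u x)) * sgn_bit (hfun F b a u))"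
  proof (intro sum.cong refl)
    fix x u :: "bit^'n"
    have "?f x + dotp x a + (?f (x + u) + dotp (x + u) a) = dotp b (Dv F u x) + hfun F b a u"
      unfolding B_expand hfun_def dotp_add_left
      by (rule bit_eq_from_add) (simp add: ac_simps)
    then show "sgn_bit (?f x + dotp x a) * sgn_bit (?f (x + u) + dotp (x + u) a) =
          sgn_bit (dotp b (Dv F u x)) * sgn_bit (hfun F b a u)"
      by (metis sgn_bit_add)
  qed
  also have "\<dots> = (\<Sum>u\<in>UNIV. sgn_bit (hfun F b a u) * (\<Sum>x\<in>UNIV. sgn_bit (dotp b (Dv F u x))))"
    by (subst sum.swap) (simp add: sum_distrib_left mult.commute)
  also have "\<dots> = (\<Sum>u\<in>UNIV. if u \<in> ?V then 2 ^ CARD('n) * sgn_bit (hfun F b a u) else 0)"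
    by (rule sum.cong) (auto simp: inner_char[OF q])
  also have "\<dots> = (\<Sum>u\<in>?V. 2 ^ CARD('n) * sgn_bit (hfun F b a u))"
    by (simp add: sum.inter_restrict[symmetric])
  also have "\<dots> = 2 ^ CARD('n) * (\<Sum>u\<in>?V. sgn_bit (hfun F b a u))"
    by (simp add: sum_distrib_left)
  also have "(\<Sum>u\<in>?V. sgn_bit (hfun F b a u)) =
      (if \<forall>u\<in>?V. hfun F b a u = 0 then int (card ?V) else 0)"
    by (rule char_sum) (auto intro: Vb_closed[OF q] hfun_add)
  finally show ?thesis .
qed

lemma exists_good_a:
  fixes F :: "bit^'n \<Rightarrow> bit^'n"
  assumes q: "is_quadratic F"
  shows "\<exists>a. \<forall>u\<in>Vb F b. hfun F b a u = 0"
proof (rule ccontr)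
  assume na: "\<not> ?thesis"
  let ?V = "Vb F b"
  have "(\<Sum>a\<in>UNIV. \<Sum>u\<in>?V. sgn_bit (hfun F b a u)) =
        (\<Sum>a\<in>(UNIV::(bit^'n) set). (if \<forall>u\<in>?V. hfun F b a u = 0 then int (card ?V) else 0))"
    by (rule sum.cong[OF refl], rule char_sum) (auto intro: Vb_closed[OF q] hfun_add)
  also have "\<dots> = 0" by (intro sum.neutral ballI if_not_P) (use na in blast)
  finally have z: "(\<Sum>a\<in>UNIV. \<Sum>u\<in>?V. sgn_bit (hfun F b a u)) = 0" .
  have "(\<Sum>a\<in>UNIV. \<Sum>u\<in>?V. sgn_bit (hfun F b a u)) =
        (\<Sum>u\<in>?V. sgn_bit (component F b u + component F b 0) * (\<Sum>a\<in>UNIV. sgn_bit (dotp a u)))"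
    unfolding hfun_def sgn_bit_add
    by (subst sum.swap) (simp add: sum_distrib_left dotp_comm)
  also have "\<dots> = (\<Sum>u\<in>?V. if u = 0 then 2 ^ CARD('n) else 0)"
    by (rule sum.cong[OF refl]) (simp add: dotp_sum sgn_bit_add[symmetric])
  also have "\<dots> = 2 ^ CARD('n)"
    by (simp add: sum.delta)
  finally show False using z by simp
qed


lemma amp_iff:
  fixes F :: "bit^'n \<Rightarrow> bit^'n"
  assumes q: "is_quadratic F"
  shows "has_amplitude_exp F b k \<longleftrightarrow> card (Vb F b) = 2 ^ k"
proof
  assume "has_amplitude_exp F b k"
  then obtain a where a: "(walsh F b a)\<^sup>2 = 2 ^ (CARD('n) + k)"
    unfolding has_amplitude_exp_def by blast
  show "card (Vb F b) = 2 ^ k"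
  proof (cases "\<forall>u\<in>Vb F b. hfun F b a u = 0")
    case True
    then have "(2::int) ^ CARD('n) * int (card (Vb F b)) = 2 ^ CARD('n) * 2 ^ k"
      using a walsh_sq[OF q, of b a] by (simp add: power_add)
    then have "int (card (Vb F b)) = 2 ^ k" by (metis mult_left_cancel power_not_zero zero_neq_numeral)
    then show ?thesis by (metis of_nat_eq_of_nat_power_cancel_iff of_nat_numeral)
  next
    case False
    have "(walsh F b a)\<^sup>2 = 0" using walsh_sq[OF q, of b a] by (simp only: if_not_P[OF False] mult_zero_right)
    then show ?thesis using a by simp
  qed
next
  assume c: "card (Vb F b) = 2 ^ k"
  have "walsh F b a = 0 \<or> (walsh F b a)\<^sup>2 = 2 ^ (CARD('n) + k)" for a
    using walsh_sq[OF q, of b a] c by (cases "\<forall>u\<in>Vb F b. hfun F b a u = 0") (simp_all add: power_add)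
  moreover obtain a where "\<forall>u\<in>Vb F b. hfun F b a u = 0" using exists_good_a[OF q] by blast
  then have "(walsh F b a)\<^sup>2 = 2 ^ (CARD('n) + k)"
    using walsh_sq[OF q, of b a] c by (simp add: power_add)
  ultimately show "has_amplitude_exp F b k" unfolding has_amplitude_exp_def by blast
qed

lemma sq_pow2_even: "(w::int)\<^sup>2 = 2 ^ k \<Longrightarrow> even k"
proof (induction k arbitrary: w rule: less_induct)
  case (less k)
  show ?case
  proof (cases "k \<le> 1")
    case True
    show ?thesis
    proof (cases "k = 0")
      case False
      then have "k = 1" using True by simp
      then have w2: "w * w = 2" using less.prems by (simp add: power2_eq_square)
      show ?thesis
      proof (cases "\<bar>w\<bar> \<le> 1")
        case True
        then have "\<bar>w\<bar> * \<bar>w\<bar> \<le> 1" by (metis abs_ge_zero mult_le_one)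
        then show ?thesis using w2 by (simp add: abs_mult[symmetric])
      next
        case False
        then have "\<bar>w\<bar> * \<bar>w\<bar> \<ge> 2 * 2" by (intro mult_mono) auto
        then show ?thesis using w2 by (simp add: abs_mult[symmetric])
      qed
    qed simp
  next
    case False
    then obtain k' where k: "k = k' + 2" by (metis add.commute le_Suc_ex not_less_eq_eq one_add_one plus_1_eq_Suc)
    have "even (w\<^sup>2)" using less.prems k by simp
    then have "even w" by simp
    then obtain v where v: "w = 2 * v" by blast
    have "4 * v\<^sup>2 = 4 * 2 ^ k'" using less.prems k v by (simp add: power_mult_distrib power_add)
    then have "v\<^sup>2 = 2 ^ k'" by simp
    then have "even k'" using less.IH[of k'] k by simp
    then show ?thesis using k by simp
  qed
qed

lemma amp_even:
  fixes F :: "bit^'n \<Rightarrow> bit^'n"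
  assumes q: "is_quadratic F" and ev: "even CARD('n)"
  shows "\<exists>j. 2 * j \<le> CARD('n) \<and> card (Vb F b) = 2 ^ (2 * j)"
proof -
  obtain m where m: "m \<le> CARD('n)" "card (Vb F b) = 2 ^ m" using Vb_card_pow[OF q] by blast
  obtain a where "\<forall>u\<in>Vb F b. hfun F b a u = 0" using exists_good_a[OF q] by blast
  then have "(walsh F b a)\<^sup>2 = 2 ^ (CARD('n) + m)"
    using walsh_sq[OF q, of b a] m by (simp add: power_add)
  then have "even (CARD('n) + m)" by (rule sq_pow2_even)
  then have "even m" using ev by simp
  then obtain j where "m = 2 * j" by blast
  then show ?thesis using m by blast
qed

lemma vec_eq_from_add: "(u::bit^'n) + v = 0 \<Longrightarrow> u = v"
  by (metis vec_add_cancel(1) add_0)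

lemma vec_add_zero_iff: "(u::bit^'n) + v = 0 \<longleftrightarrow> u = v"
  using vec_eq_from_add by auto

lemma apn_kernel:
  fixes F :: "bit^'n \<Rightarrow> bit^'n"
  assumes apn: "is_APN F" and a: "a \<noteq> 0"
  shows "{x. Dv F a x = 0} = {0, a}"
proof -
  let ?S = "{x. F x + F (x + a) = F 0 + F (0 + a)}"
  have eq: "{x. Dv F a x = 0} = ?S"
  proof (rule Collect_cong)
    fix x
    have "Dv F a x = (F x + F (x + a)) + (F 0 + F (0 + a))" unfolding Dv_def by (simp add: ac_simps)
    then show "(Dv F a x = 0) = (F x + F (x + a) = F 0 + F (0 + a))"
      by (simp add: vec_add_zero_iff)
  qed
  have le: "card ?S \<le> 2" using apn a unfolding is_APN_def by blast
  have sub: "{0, a} \<subseteq> ?S" by (auto simp: add.commute)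
  have c2: "card {0, a} = 2" using a by simp
  have "{0, a} = ?S" by (rule card_seteq) (use le sub c2 in auto)
  then show ?thesis using eq by simp
qed

lemma sum_if_const: "(\<Sum>x\<in>(UNIV::'a::finite set). if P x then (c::int) else 0) = int (card {x. P x}) * c"
  by (simp add: sum.If_cases)

lemma card_T:
  fixes F :: "bit^'n \<Rightarrow> bit^'n"
  assumes q: "is_quadratic F" and apn: "is_APN F" and a: "a \<noteq> 0"
  shows "card {b. a \<in> Vb F b} = 2"
proof -
  have "(\<Sum>b\<in>UNIV. \<Sum>x\<in>UNIV. sgn_bit (dotp b (Dv F a x))) = (\<Sum>b\<in>(UNIV::(bit^'n) set). if a \<in> Vb F b then 2 ^ CARD('n) else 0)"
    by (simp add: inner_char[OF q])
  also have "\<dots> = int (card {b. a \<in> Vb F b}) * 2 ^ CARD('n)" by (rule sum_if_const)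
  finally have l: "(\<Sum>b\<in>UNIV. \<Sum>x\<in>UNIV. sgn_bit (dotp b (Dv F a x))) = int (card {b. a \<in> Vb F b}) * 2 ^ CARD('n)" .
  have "(\<Sum>b\<in>UNIV. \<Sum>x\<in>UNIV. sgn_bit (dotp b (Dv F a x))) = (\<Sum>x\<in>(UNIV::(bit^'n) set). if Dv F a x = 0 then 2 ^ CARD('n) else 0)"
    by (subst sum.swap) (simp add: dotp_sum)
  also have "\<dots> = int (card {x. Dv F a x = 0}) * 2 ^ CARD('n)" by (rule sum_if_const)
  also have "\<dots> = 2 * 2 ^ CARD('n)" using apn_kernel[OF apn a] a by simp
  finally show ?thesis using l by simp
qed

lemma unique_b:
  fixes F :: "bit^'n \<Rightarrow> bit^'n"
  assumes q: "is_quadratic F" and apn: "is_APN F" and a: "a \<noteq> 0"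
  shows "\<exists>b. b \<noteq> 0 \<and> a \<in> Vb F b"
    and "\<And>b c. b \<noteq> 0 \<Longrightarrow> c \<noteq> 0 \<Longrightarrow> a \<in> Vb F b \<Longrightarrow> a \<in> Vb F c \<Longrightarrow> b = c"
proof -
  let ?T = "{b. a \<in> Vb F b}"
  have cT: "card ?T = 2" by (rule card_T[OF q apn a])
  have z: "0 \<in> ?T" unfolding Vb_def by simp
  show "\<exists>b. b \<noteq> 0 \<and> a \<in> Vb F b"
  proof (rule ccontr)
    assume "\<not> ?thesis"
    then have "?T = {0}" using z by auto
    then show False using cT by simp
  qed
  fix b c :: "bit^'n"
  assume b: "b \<noteq> 0" and c: "c \<noteq> 0" and ab: "a \<in> Vb F b" and ac: "a \<in> Vb F c"
  show "b = c"
  proof (rule ccontr)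
    assume "b \<noteq> c"
    then have "card {0, b, c} = 3" using b c by simp
    moreover have "card {0, b, c} \<le> card ?T" by (rule card_mono) (use z ab ac in auto)
    ultimately show False using cT by simp
  qed
qed

lemma pair_bound:
  fixes F :: "bit^'n \<Rightarrow> bit^'n"
  assumes q: "is_quadratic F" and apn: "is_APN F"
    and b: "b \<noteq> 0" and c: "c \<noteq> 0" and bc: "b \<noteq> c"
  shows "card (Vb F b) * card (Vb F c) \<le> 2 ^ CARD('n)"
proof -
  have inj: "inj_on (\<lambda>(u, v). u + v) (Vb F b \<times> Vb F c)"
  proof (rule inj_onI, clarify)
    fix u v u' v'
    assume u: "u \<in> Vb F b" "u' \<in> Vb F b" and v: "v \<in> Vb F c" "v' \<in> Vb F c"
      and e: "u + v = u' + v'"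
    have uv: "u + u' = v + v'"
    proof -
      have "u + u' + (v + v') = (u + v) + (u' + v')" by (simp add: ac_simps)
      also have "\<dots> = 0" using e by simp
      finally show ?thesis by (rule vec_eq_from_add)
    qed
    have w1: "u + u' \<in> Vb F b" by (rule Vb_closed[OF q u])
    have w2: "u + u' \<in> Vb F c" unfolding uv by (rule Vb_closed[OF q v])
    have "u + u' = 0"
    proof (rule ccontr)
      assume "u + u' \<noteq> 0"
      then have "b = c" using unique_b(2)[OF q apn _ b c w1 w2] by blast
      then show False using bc by simp
    qed
    then have "u = u'" by (rule vec_eq_from_add)
    moreover have "v = v'" using \<open>u + u' = 0\<close> uv by (metis vec_eq_from_add)
    ultimately show "u = u' \<and> v = v'" by simp
  qed
  have "card (Vb F b \<times> Vb F c) \<le> card (UNIV :: (bit^'n) set)"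
    by (rule card_inj_on_le[OF inj]) auto
  then show ?thesis by (simp add: card_cartesian_product)
qed



lemma amp_dist_eq:
  fixes F :: "bit^'n \<Rightarrow> bit^'n"
  assumes q: "is_quadratic F"
  shows "amp_dist F i = card {b. b \<noteq> 0 \<and> card (Vb F b) = 2 ^ i}"
  unfolding amp_dist_def using amp_iff[OF q] by simp

lemma exp_le:
  assumes "(2::nat) ^ a * 2 ^ b \<le> 2 ^ c" shows "a + b \<le> c"
proof -
  have "(2::nat) ^ (a + b) \<le> 2 ^ c" using assms by (simp add: power_add)
  then show ?thesis by (simp add: power_increasing_iff)
qed

theorem mainTheorem5:
  fixes F :: "bit ^ 'n \<Rightarrow> bit ^ 'n"
  assumes "even CARD('n)"
    and "is_quadratic F"
    and "is_APN F"
  shows "(\<Sum>i = 1..CARD('n) div 2. amp_dist F (2 * i) * (2 ^ (2 * i) - 1)) = 2 ^ CARD('n) - 1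
         \<and> (\<forall>i. i > CARD('n) div 2 \<longrightarrow> amp_dist F i \<le> 1)
         \<and> (\<forall>i j. i \<noteq> j \<and> amp_dist F i \<ge> 1 \<and> amp_dist F j \<ge> 1 \<longrightarrow> i + j \<le> CARD('n))"
proof (intro conjI allI impI)
  note ev = assms(1) and q = assms(2) and apn = assms(3)
  let ?N = "CARD('n)"
  let ?I = "UNIV - {0::bit^'n}"
  have part: "(\<Sum>b\<in>?I. card (Vb F b) - 1) = 2 ^ ?N - 1"
  proof -
    have "(\<Sum>b\<in>?I. card (Vb F b) - 1) = (\<Sum>b\<in>?I. card (Vb F b - {0}))"
      by (rule sum.cong) (simp_all add: card_Diff_singleton)
    also have "\<dots> = card (\<Union>b\<in>?I. Vb F b - {0})"
    proof (rule card_UN_disjoint[symmetric])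
      show "\<forall>i\<in>?I. \<forall>j\<in>?I. i \<noteq> j \<longrightarrow> (Vb F i - {0}) \<inter> (Vb F j - {0}) = {}"
        using unique_b(2)[OF q apn] by blast
    qed simp_all
    also have "(\<Union>b\<in>?I. Vb F b - {0}) = UNIV - {0}"
      using unique_b(1)[OF q apn] by blast
    also have "card (UNIV - {0::bit^'n}) = 2 ^ ?N - 1"
      by (simp add: card_Diff_singleton)
    finally show ?thesis .
  qed
  have "\<forall>b. \<exists>j. 2 * j \<le> ?N \<and> card (Vb F b) = 2 ^ (2 * j)"
    using amp_even[OF q ev] by blast
  then obtain jf where jf: "\<And>b. 2 * jf b \<le> ?N \<and> card (Vb F b) = 2 ^ (2 * jf b)"
    by metis
  have cnt: "amp_dist F (2 * i) = card {b \<in> ?I. jf b = i}" for i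
  proof -
    have "{b. b \<noteq> 0 \<and> card (Vb F b) = 2 ^ (2 * i)} = {b \<in> ?I. jf b = i}"
      using jf by (auto simp: power_inject_exp)
    then show ?thesis using amp_dist_eq[OF q] by simp
  qed
  have "(\<Sum>b\<in>?I. card (Vb F b) - 1) = (\<Sum>b\<in>?I. 2 ^ (2 * jf b) - 1)"
    using jf by simp
  also have "\<dots> = (\<Sum>i\<in>{0..?N div 2}. \<Sum>b\<in>{b \<in> ?I. jf b = i}. 2 ^ (2 * jf b) - 1)"
  proof (rule sum.group[symmetric])
    have "jf b \<le> ?N div 2" for b using jf[of b] by presburger
    then show "jf ` ?I \<subseteq> {0..?N div 2}" by auto
  qed simp_all
  also have "\<dots> = (\<Sum>i\<in>{0..?N div 2}. amp_dist F (2 * i) * (2 ^ (2 * i) - 1))"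
    by (rule sum.cong) (simp_all add: cnt)
  also have "\<dots> = (\<Sum>i = 1..?N div 2. amp_dist F (2 * i) * (2 ^ (2 * i) - 1))"
    by (simp add: sum.atLeast_Suc_atMost)
  finally show "(\<Sum>i = 1..?N div 2. amp_dist F (2 * i) * (2 ^ (2 * i) - 1)) = 2 ^ ?N - 1"
    using part by simp
next
  note q = assms(2) and apn = assms(3)
  fix i assume i: "CARD('n) div 2 < i"
  let ?S = "{b. b \<noteq> 0 \<and> card (Vb F b) = 2 ^ i}"
  show "amp_dist F i \<le> 1"
  proof (rule ccontr)
    assume "\<not> amp_dist F i \<le> 1"
    then have c2: "card ?S \<ge> 2" using amp_dist_eq[OF q] by simp
    have "?S \<noteq> {}" using c2 by (cases "?S = {}") auto
    then obtain b where b: "b \<in> ?S" by blast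
    have "card (?S - {b}) = card ?S - 1" using b by (intro card_Diff_singleton) auto
    then have "card (?S - {b}) \<ge> 1" using c2 by linarith
    then have "?S - {b} \<noteq> {}" by (cases "?S - {b} = {}") auto
    then obtain c where c: "c \<in> ?S - {b}" by blast
    have "card (Vb F b) * card (Vb F c) \<le> 2 ^ CARD('n)"
      by (rule pair_bound[OF q apn]) (use b c in auto)
    then have "i + i \<le> CARD('n)" using b c by (intro exp_le) simp
    then show False using i by linarith
  qed
next
  note q = assms(2) and apn = assms(3)
  fix i j assume h: "i \<noteq> j \<and> 1 \<le> amp_dist F i \<and> 1 \<le> amp_dist F j"
  have ne: "{b. b \<noteq> 0 \<and> card (Vb F b) = 2 ^ k} \<noteq> {}" if "1 \<le> amp_dist F k" for k
  proof
    assume e: "{b. b \<noteq> 0 \<and> card (Vb F b) = 2 ^ k} = {}"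
    have "amp_dist F k = 0" using amp_dist_eq[OF q, of k] unfolding e by simp
    then show False using that by simp
  qed
  obtain b where b: "b \<noteq> 0" "card (Vb F b) = 2 ^ i" using ne[of i] h by blast
  obtain c where c: "c \<noteq> 0" "card (Vb F c) = 2 ^ j" using ne[of j] h by blast
  have "b \<noteq> c" using b c h by (auto simp: power_inject_exp)
  then have "card (Vb F b) * card (Vb F c) \<le> 2 ^ CARD('n)"
    by (rule pair_bound[OF q apn b(1) c(1)])
  then show "i + j \<le> CARD('n)" using b c by (intro exp_le) simp
qed

end
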